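(* There exist absolute constants $c>0$, $K\ge1$ and $m_0$ such that for every $m\ge m_0$ and every $\epsilon\in\big(2\log m/m^{1/20},\,1\big)$ there is a set system $(U,\mathcal{S})$ with $|\mathcal{S}|=m$ sets covering $U$ and $|U|\le(\log m/\epsilon)^{K}$, such that for every $\epsilon$-differentially private algorithm $M$ that maps each private set $R\subseteq U$ to a (random) assignment $f:U\to\mathcal{S}$ with $e\in f(e)$ for all $e\in U$, there is a nonempty $R\subseteq U$ with $\mathbb{E}\big[|\{f(e):e\in R\}|\big]\ge c\,\frac{\log m}{\epsilon}\,\mathrm{OPT}(R)$, where $f=M(R)$.
   Context: $M$ is $\epsilon$-differentially private if for all $R,R'\subseteq U$ with symmetric difference of size one and all sets $\mathcal{O}$ of outputs, $\Pr[M(R)\in\mathcal{O}]\le e^{\epsilon}\Pr[M(R')\in\mathcal{O}]$. $\mathrm{OPT}(R)$ is the minimum number of sets of $\mathcal{S}$ covering $R$. *)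

theory Defs
  imports "HOL-Probability.Probability"
begin

definition OPT :: "'a set set \<Rightarrow> 'a set \<Rightarrow> nat" where
  "OPT S R = Min {card C | C. C \<subseteq> S \<and> R \<subseteq> \<Union>C}"

definition diff_private :: "real \<Rightarrow> 'a set \<Rightarrow> ('a set \<Rightarrow> 'b pmf) \<Rightarrow> bool" where
  "diff_private eps U M \<longleftrightarrow>
     (\<forall>R R' Os. R \<subseteq> U \<longrightarrow> R' \<subseteq> U \<longrightarrow> card ((R - R') \<union> (R' - R)) = 1 \<longrightarrow>
        measure_pmf.prob (M R) Os \<le> exp eps * measure_pmf.prob (M R') Os)"

definition valid_assignment_mech ::
  "'a set \<Rightarrow> 'a set set \<Rightarrow> ('a set \<Rightarrow> ('a \<Rightarrow> 'a set) pmf) \<Rightarrow> bool" where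
  "valid_assignment_mech U S M \<longleftrightarrow>
     (\<forall>R f e. R \<subseteq> U \<longrightarrow> f \<in> set_pmf (M R) \<longrightarrow> e \<in> U \<longrightarrow> f e \<in> S \<and> e \<in> f e)"

end

theory Submission
  imports Defs
begin


lemma group_priv:
  assumes dp: "diff_private eps U M" and fin: "finite R" and sub: "R \<subseteq> U"
  shows "measure_pmf.prob (M R) Os \<le> exp (eps * card R) * measure_pmf.prob (M {}) Os"
  using fin sub
proof (induction R rule: finite_induct)
  case empty then show ?case by simp
next
  case (insert x F)
  have c: "card ((insert x F - F) \<union> (F - insert x F)) = 1"
    using insert.hyps by (simp add: insert_Diff_if)
  have "measure_pmf.prob (M (insert x F)) Os \<le> exp eps * measure_pmf.prob (M F) Os"
    using dp insert.prems c unfolding diff_private_def by blast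
  also have "\<dots> \<le> exp eps * (exp (eps * card F) * measure_pmf.prob (M {}) Os)"
    using insert by (intro mult_left_mono) auto
  also have "\<dots> = exp (eps * card (insert x F)) * measure_pmf.prob (M {}) Os"
    using insert.hyps by (simp add: exp_add[symmetric] algebra_simps)
  finally show ?case .
qed

lemma extend_subset:
  assumes "I \<subseteq> X" "finite X" "card I \<le> t" "t \<le> card X"
  obtains T where "I \<subseteq> T" "T \<subseteq> X" "card T = t"
proof -
  have fI: "finite I" using assms finite_subset by blast
  have "t - card I \<le> card (X - I)" using assms fI by (simp add: card_Diff_subset)
  then obtain D where D: "D \<subseteq> X - I" "card D = t - card I" "finite D"
    by (rule obtain_subset_with_card_n)
  have "card (I \<union> D) = card I + card D"
    using D fI by (intro card_Un_disjoint) auto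
  then show ?thesis using that[of "I \<union> D"] D assms by auto
qed

lemma div_enc:
  fixes a i j x y :: nat
  assumes "x < a" "y < a" "i * a + x = j * a + y"
  shows "i = j \<and> x = y"
proof -
  have 1: "(i * a + x) div a = i" "(i*a+x) mod a = x" using assms(1) by auto
  have 2: "(j * a + y) div a = j" "(j*a+y) mod a = y" using assms(2) by auto
  show ?thesis using 1 2 assms(3) by simp
qed



definition words :: "nat \<Rightarrow> nat \<Rightarrow> (nat \<Rightarrow> nat) set" where
  "words k a = PiE {..<k} (\<lambda>_. {..<a})"

definition agree :: "nat \<Rightarrow> (nat \<Rightarrow> nat) \<Rightarrow> (nat \<Rightarrow> nat) \<Rightarrow> nat" where
  "agree k v w = card {i\<in>{..<k}. v i = w i}"

lemma finite_words: "finite (words k a)"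
  unfolding words_def by (simp add: finite_PiE)

lemma card_words: "card (words k a) = a ^ k"
  unfolding words_def by (simp add: card_PiE)

lemma fix_card:
  assumes v: "v \<in> words k a" and I: "I \<subseteq> {..<k}"
  shows "card {w \<in> words k a. \<forall>i\<in>I. w i = v i} \<le> a ^ (k - card I)"
proof -
  have "{w \<in> words k a. \<forall>i\<in>I. w i = v i} \<subseteq> PiE {..<k} (\<lambda>i. if i \<in> I then {v i} else {..<a})"
  proof
    fix w assume "w \<in> {w \<in> words k a. \<forall>i\<in>I. w i = v i}"
    then have w0: "w \<in> words k a" "\<forall>i\<in>I. w i = v i"
      by simp_all
    have w: "w \<in> PiE {..<k} (\<lambda>_. {..<a})" "\<forall>i\<in>I. w i = v i"
      using w0 by (simp only: words_def)+
    show "w \<in> PiE {..<k} (\<lambda>i. if i \<in> I then {v i} else {..<a})"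
    proof (rule PiE_I)
      fix i assume "i \<in> {..<k}"
      then show "w i \<in> (if i \<in> I then {v i} else {..<a})"
        using PiE_mem[OF w(1) \<open>i \<in> {..<k}\<close>] w(2) by simp
    next
      fix i assume "i \<notin> {..<k}"
      then show "w i = undefined" using PiE_arb[OF w(1)] by blast
    qed
  qed
  moreover have "card (PiE {..<k} (\<lambda>i. if i \<in> I then {v i} else {..<a})) = a ^ (k - card I)"
  proof -
    have "card (PiE {..<k} (\<lambda>i. if i \<in> I then {v i} else {..<a}))
        = (\<Prod>i\<in>{..<k}. card (if i \<in> I then {v i} else {..<a}))"
      by (simp add: card_PiE)
    also have "\<dots> = (\<Prod>i\<in>{..<k}. (if i \<in> I then 1 else a))"
      by (rule prod.cong) auto
    also have "\<dots> = a ^ card ({..<k} - I)"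
      by (simp add: prod.If_cases Diff_eq)
    also have "\<dots> = a ^ (k - card I)"
      using I by (subst card_Diff_subset) (auto intro: finite_subset)
    finally show ?thesis .
  qed
  moreover have "finite (PiE {..<k} (\<lambda>i. if i \<in> I then {v i} else {..<a}))"
    by (rule finite_PiE) auto
  ultimately show ?thesis using card_mono[of "PiE {..<k} (\<lambda>i. if i \<in> I then {v i} else {..<a})"] by simp
qed


lemma close_card:
  assumes v: "v \<in> words k a" and sk: "s + 1 \<le> k"
  shows "card {w \<in> words k a. s < agree k v w} \<le> (k choose (s+1)) * a ^ (k - (s+1))"
proof -
  let ?Is = "{I. I \<subseteq> {..<k} \<and> card I = s + 1}"
  have sub: "{w \<in> words k a. s < agree k v w} \<subseteq> (\<Union>I\<in>?Is. {w \<in> words k a. \<forall>i\<in>I. w i = v i})"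
  proof
    fix w assume w: "w \<in> {w \<in> words k a. s < agree k v w}"
    let ?J = "{i\<in>{..<k}. v i = w i}"
    have "s < card ?J" using w unfolding agree_def by simp
    then have "s + 1 \<le> card ?J" by simp
    then obtain I where I: "I \<subseteq> ?J" "card I = s + 1" by (rule obtain_subset_with_card_n)
    show "w \<in> (\<Union>I\<in>?Is. {w \<in> words k a. \<forall>i\<in>I. w i = v i})"
    proof (rule UN_I[of I])
      have "I \<subseteq> {..<k}" using I(1) by auto
      then show "I \<in> ?Is" using I(2) by simp
      have "w \<in> words k a" using w by simp
      moreover have "\<forall>i\<in>I. w i = v i" using I(1) by auto
      ultimately show "w \<in> {w \<in> words k a. \<forall>i\<in>I. w i = v i}" by simp
    qed
  qed
  have fin: "finite ?Is" by (rule finite_subset[of _ "Pow {..<k}"]) auto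
  have "card {w \<in> words k a. s < agree k v w} \<le> card (\<Union>I\<in>?Is. {w \<in> words k a. \<forall>i\<in>I. w i = v i})"
  proof (rule card_mono[OF _ sub])
    show "finite (\<Union>I\<in>?Is. {w \<in> words k a. \<forall>i\<in>I. w i = v i})"
      by (rule finite_subset[OF _ finite_words]) blast
  qed
  also have "\<dots> \<le> (\<Sum>I\<in>?Is. card {w \<in> words k a. \<forall>i\<in>I. w i = v i})"
    by (rule card_UN_le[OF fin])
  also have "\<dots> \<le> (\<Sum>I\<in>?Is. a ^ (k - (s+1)))"
  proof (rule sum_mono)
    fix I assume "I \<in> ?Is"
    then have "I \<subseteq> {..<k}" "card I = s + 1" by blast+
    then show "card {w \<in> words k a. \<forall>i\<in>I. w i = v i} \<le> a ^ (k - (s+1))"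
      using fix_card[OF v, of I] by simp
  qed
  also have "\<dots> = (k choose (s+1)) * a ^ (k - (s+1))"
    using n_subsets[of "{..<k}" "s+1"] by simp
  finally show ?thesis .
qed

lemma code_exists:
  assumes sk: "s < k" and a: "0 < a"
    and big: "m * ((k choose (s+1)) * a ^ (k - (s+1))) \<le> a ^ k"
  shows "j \<le> m \<Longrightarrow> \<exists>W. W \<subseteq> words k a \<and> card W = j \<and>
      (\<forall>v\<in>W. \<forall>w\<in>W. v \<noteq> w \<longrightarrow> agree k v w \<le> s)"
proof (induction j)
  case 0 then show ?case by (intro exI[of _ "{}"]) auto
next
  case (Suc j)
  then obtain W where W: "W \<subseteq> words k a" "card W = j"
    "\<forall>v\<in>W. \<forall>w\<in>W. v \<noteq> w \<longrightarrow> agree k v w \<le> s" by auto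
  let ?C = "(k choose (s+1)) * a ^ (k - (s+1))"
  let ?Bad = "\<Union>v\<in>W. {w \<in> words k a. s < agree k v w}"
  have finW: "finite W" using finite_subset[OF W(1) finite_words] .
  have "card ?Bad \<le> (\<Sum>v\<in>W. card {w \<in> words k a. s < agree k v w})"
    by (rule card_UN_le[OF finW])
  also have "\<dots> \<le> (\<Sum>v\<in>W. ?C)"
  proof (rule sum_mono)
    fix v assume "v \<in> W"
    then have "v \<in> words k a" using subsetD[OF W(1)] by simp
    then show "card {w \<in> words k a. s < agree k v w} \<le> ?C" using close_card sk by simp
  qed
  also have "\<dots> = j * ?C" using W by simp
  also have "\<dots> < m * ?C"
  proof -
    have "0 < k choose (s+1)" using sk by simp
    then have "0 < ?C" using a by simp
    then show ?thesis using Suc.prems by simp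
  qed
  also have "\<dots> \<le> a ^ k" by (rule big)
  finally have lt: "card ?Bad < card (words k a)" by (simp add: card_words)
  then obtain w where w: "w \<in> words k a" "w \<notin> ?Bad"
  proof -
    have "\<not> words k a \<subseteq> ?Bad"
    proof
      assume "words k a \<subseteq> ?Bad"
      then have "card (words k a) \<le> card ?Bad"
      proof (rule card_mono[rotated])
        show "finite ?Bad" by (rule finite_subset[OF _ finite_words]) (rule UN_least, rule Collect_restrict)
      qed
      then show False using lt by simp
    qed
    then obtain x where "x \<in> words k a" "x \<notin> ?Bad" by (auto simp only: subset_iff)
    then show ?thesis using that by simp
  qed
  have agk: "agree k v v = k" for v unfolding agree_def by simp
  have wW: "w \<notin> W"
  proof
    assume wW: "w \<in> W" then have "w \<in> {x \<in> words k a. s < agree k w x}" using w sk agk by simp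
    then have "w \<in> ?Bad" using wW by (rule UN_I[rotated])
    then show False using w by simp
  qed
  have ag_sym: "agree k v u = agree k u v" for u v unfolding agree_def by (simp add: eq_commute)
  show ?case
  proof (intro exI[of _ "insert w W"] conjI)
    show "insert w W \<subseteq> words k a" using W(1) w(1) by (rule insert_subsetI[rotated])
    show "card (insert w W) = Suc j" using W wW finW by simp
    have wv: "agree k v w \<le> s" if v: "v \<in> W" for v
    proof (rule ccontr)
      assume "\<not> agree k v w \<le> s"
      then have "w \<in> {x \<in> words k a. s < agree k v x}" using w(1) by simp
      then have "w \<in> ?Bad" using v by (rule UN_I[rotated])
      then show False using w(2) by simp
    qed
    show "\<forall>v\<in>insert w W. \<forall>u\<in>insert w W. v \<noteq> u \<longrightarrow> agree k v u \<le> s"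
    proof (intro ballI impI)
      fix v u assume v: "v \<in> insert w W" and u: "u \<in> insert w W" and vu: "v \<noteq> u"
      show "agree k v u \<le> s"
      proof (cases "v = w")
        case True then have "u \<in> W" using u vu by simp
        then show ?thesis using wv[of u] ag_sym[of w u] True by simp
      next
        case False then have v': "v \<in> W" using v by simp
        show ?thesis
        proof (cases "u = w")
          case True then show ?thesis using wv[OF v'] by simp
        next
          case False then have "u \<in> W" using u by simp
          then show ?thesis using W(3) v' vu by simp
        qed
      qed
    qed
  qed
qed




lemma card_cap_le:
  assumes fT: "finite T" and h: "\<And>B. B \<in> T \<Longrightarrow> card (A \<inter> B) \<le> s"
  shows "card (A \<inter> \<Union>T) \<le> card T * s"
proof -
  have "A \<inter> \<Union>T = (\<Union>B\<in>T. A \<inter> B)" by auto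
  then have "card (A \<inter> \<Union>T) \<le> (\<Sum>B\<in>T. card (A \<inter> B))"
    using card_UN_le[OF fT, of "\<lambda>B. A \<inter> B"] by simp
  also have "\<dots> \<le> (\<Sum>B\<in>T. s)" by (rule sum_mono) (rule h)
  also have "\<dots> = card T * s" by simp
  finally show ?thesis .
qed

lemma count_A:
  fixes f :: "nat \<Rightarrow> nat set"
  assumes fA: "finite A" and cA: "card A = k" and mem: "\<And>e. e \<in> A \<Longrightarrow> e \<in> f e"
    and small: "\<And>e. e \<in> A \<Longrightarrow> card (A \<inter> f e) \<le> s" and ts: "t * s < k"
  shows "card {g \<in> PiE {..<r} (\<lambda>_. A). card (f ` g ` {..<r}) \<le> t} \<le> k ^ t * (t * s) ^ r"
proof -
  have smallB: "card (A \<inter> B) \<le> s" if "B \<in> f ` A" for B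
    using that small by auto
  have ffA: "finite (f ` A)" using fA by simp
  have "A \<subseteq> A \<inter> \<Union>(f ` A)" using mem by auto
  then have "card A \<le> card (A \<inter> \<Union>(f ` A))" by (intro card_mono) (use fA in auto)
  also have "\<dots> \<le> card (f ` A) * s" by (rule card_cap_le[OF ffA smallB])
  finally have cov: "k \<le> card (f ` A) * s" using cA by simp
  have tle: "t \<le> card (f ` A)"
  proof (rule ccontr)
    assume "\<not> t \<le> card (f ` A)"
    then have "card (f ` A) * s \<le> t * s" by (intro mult_right_mono) simp_all
    then show False using cov ts by linarith
  qed
  let ?Ts = "{T. T \<subseteq> f ` A \<and> card T = t}"
  let ?Bad = "{g \<in> PiE {..<r} (\<lambda>_. A). card (f ` g ` {..<r}) \<le> t}"
  have finTs: "finite ?Ts" by (rule finite_subset[of _ "Pow (f ` A)"]) (use ffA in auto)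
  have sub: "?Bad \<subseteq> (\<Union>T\<in>?Ts. PiE {..<r} (\<lambda>_. A \<inter> \<Union>T))"
  proof
    fix g assume g: "g \<in> ?Bad"
    then have gP: "g \<in> PiE {..<r} (\<lambda>_. A)" and gc: "card (f ` g ` {..<r}) \<le> t" by simp_all
    have gA: "g i \<in> A" if "i < r" for i using PiE_mem[OF gP] that by simp
    have "f ` g ` {..<r} \<subseteq> f ` A" using gA by auto
    then obtain T where T: "f ` g ` {..<r} \<subseteq> T" "T \<subseteq> f ` A" "card T = t"
      using extend_subset[OF _ ffA gc tle] by metis
    show "g \<in> (\<Union>T\<in>?Ts. PiE {..<r} (\<lambda>_. A \<inter> \<Union>T))"
    proof (rule UN_I[of T])
      show "T \<in> ?Ts" using T by simp
      show "g \<in> PiE {..<r} (\<lambda>_. A \<inter> \<Union>T)"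
      proof (rule PiE_I)
        fix i assume i: "i \<in> {..<r}"
        then have "g i \<in> A" using gA by simp
        moreover have "f (g i) \<in> T" using T(1) i by auto
        moreover have "g i \<in> f (g i)" using mem[OF \<open>g i \<in> A\<close>] .
        ultimately show "g i \<in> A \<inter> \<Union>T" by auto
      next
        fix i assume "i \<notin> {..<r}" then show "g i = undefined" using PiE_arb[OF gP] by simp
      qed
    qed
  qed
  have "card ?Bad \<le> card (\<Union>T\<in>?Ts. PiE {..<r} (\<lambda>_. A \<inter> \<Union>T))"
  proof (rule card_mono[OF _ sub])
    show "finite (\<Union>T\<in>?Ts. PiE {..<r} (\<lambda>_. A \<inter> \<Union>T))"
      using finTs fA by (intro finite_UN_I finite_PiE) auto
  qed
  also have "\<dots> \<le> (\<Sum>T\<in>?Ts. card (PiE {..<r} (\<lambda>_. A \<inter> \<Union>T)))"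
    by (rule card_UN_le[OF finTs])
  also have "\<dots> \<le> (\<Sum>T\<in>?Ts. (t * s) ^ r)"
  proof (rule sum_mono)
    fix T assume T: "T \<in> ?Ts"
    then have TA: "T \<subseteq> f ` A" and cT: "card T = t" by simp_all
    have fT: "finite T" using finite_subset[OF TA ffA] .
    have "card (A \<inter> \<Union>T) \<le> card T * s"
      by (rule card_cap_le[OF fT]) (use smallB TA in auto)
    then have "card (A \<inter> \<Union>T) \<le> t * s" using cT by simp
    then show "card (PiE {..<r} (\<lambda>_. A \<inter> \<Union>T)) \<le> (t * s) ^ r"
      by (simp add: card_PiE power_mono)
  qed
  also have "\<dots> = (card (f ` A) choose t) * (t * s) ^ r"
    using n_subsets[OF ffA, of t] by simp
  also have "\<dots> \<le> k ^ t * (t * s) ^ r"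
  proof (rule mult_right_mono)
    have "card (f ` A) choose t \<le> card (f ` A) ^ t" by (rule binomial_le_pow[OF tle])
    also have "\<dots> \<le> k ^ t" using card_image_le[OF fA, of f] cA by (simp add: power_mono)
    finally show "card (f ` A) choose t \<le> k ^ t" .
  qed simp
  finally show ?thesis .
qed



lemma pmf_integrable_ind: "integrable (measure_pmf p) (indicator A :: _ \<Rightarrow> real)"
  by (simp add: integrable_indicator_iff measure_pmf.emeasure_finite less_top[symmetric])

lemma pmf_prob_int: "measure_pmf.prob p A = measure_pmf.expectation p (indicator A)"
  by (simp add: integral_indicator)

lemma Sigma_filter: "{d \<in> Sigma S B. Q (snd d)} = Sigma S (\<lambda>A. {g \<in> B A. Q g})"
  by auto

lemma count_f:
  fixes f :: "nat \<Rightarrow> nat set" and S :: "nat set set"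
  assumes finS: "finite S" and cS: "card S = m"
    and sizes: "\<And>A. A \<in> S \<Longrightarrow> finite A \<and> card A = k"
    and inter: "\<And>A B. A \<in> S \<Longrightarrow> B \<in> S \<Longrightarrow> A \<noteq> B \<Longrightarrow> card (A \<inter> B) \<le> s"
    and valid: "\<And>e. e \<in> \<Union>S \<Longrightarrow> f e \<in> S \<and> e \<in> f e"
    and ts: "t * s < k" and finU: "finite (\<Union>S)"
  shows "card {d \<in> Sigma S (\<lambda>A. PiE {..<r} (\<lambda>_. A)). card (f ` snd d ` {..<r}) \<le> t}
          \<le> card (\<Union>S) * k ^ r + m * (k ^ t * (t * s) ^ r)"
proof -
  let ?U = "\<Union>S"
  let ?Bad = "\<lambda>A. {g \<in> PiE {..<r} (\<lambda>_. A). card (f ` g ` {..<r}) \<le> t}"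
  let ?X = "k ^ t * (t * s) ^ r"
  have eq: "{d \<in> Sigma S (\<lambda>A. PiE {..<r} (\<lambda>_. A)). card (f ` snd d ` {..<r}) \<le> t} = Sigma S ?Bad"
    by (rule Sigma_filter)
  have finBad: "\<forall>A\<in>S. finite (?Bad A)"
  proof
    fix A assume "A \<in> S"
    then have "finite A" using sizes by simp
    then have "finite (PiE {..<r} (\<lambda>_. A))" by (intro finite_PiE) simp_all
    then show "finite (?Bad A)" by (rule finite_subset[OF Collect_restrict])
  qed
  have "card (Sigma S ?Bad) = (\<Sum>A\<in>S. card (?Bad A))"
    by (rule card_SigmaI[OF finS finBad])
  also have "\<dots> \<le> (\<Sum>A\<in>S. if A \<in> f ` ?U then k ^ r else ?X)"
  proof (rule sum_mono)
    fix A assume A: "A \<in> S"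
    then have fA: "finite A" and cA: "card A = k" using sizes by auto
    show "card (?Bad A) \<le> (if A \<in> f ` ?U then k ^ r else ?X)"
    proof (cases "A \<in> f ` ?U")
      case True
      have "card (?Bad A) \<le> card (PiE {..<r} (\<lambda>_. A))"
        by (rule card_mono) (use fA in \<open>auto intro: finite_PiE\<close>)
      also have "\<dots> = k ^ r" using cA by (simp add: card_PiE)
      finally show ?thesis using True by simp
    next
      case False
      have "card (?Bad A) \<le> ?X"
      proof (rule count_A[OF fA cA])
        fix e assume e: "e \<in> A"
        then have eU: "e \<in> ?U" using A by auto
        show "e \<in> f e" using valid[OF eU] by simp
        have "f e \<in> S" using valid[OF eU] by simp
        moreover have "f e \<noteq> A" using False eU by auto
        ultimately show "card (A \<inter> f e) \<le> s" using inter[OF A] by simp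
      qed (rule ts)
      then show ?thesis using False by simp
    qed
  qed
  also have "\<dots> = card (S \<inter> {A. A \<in> f ` ?U}) * k ^ r + card (S \<inter> - {A. A \<in> f ` ?U}) * ?X"
    by (simp add: sum.If_cases finS)
  also have "\<dots> \<le> card ?U * k ^ r + m * ?X"
  proof (rule add_mono)
    have "card (S \<inter> {A. A \<in> f ` ?U}) \<le> card (f ` ?U)"
      by (rule card_mono) (use finU in auto)
    also have "\<dots> \<le> card ?U" by (rule card_image_le[OF finU])
    finally show "card (S \<inter> {A. A \<in> f ` ?U}) * k ^ r \<le> card ?U * k ^ r" by simp
    have "card (S \<inter> - {A. A \<in> f ` ?U}) \<le> card S" by (rule card_mono) (use finS in auto)
    then show "card (S \<inter> - {A. A \<in> f ` ?U}) * ?X \<le> m * ?X" using cS by simp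
  qed
  finally show ?thesis using eq by simp
qed



lemma main_prob:
  fixes S :: "nat set set" and M :: "nat set \<Rightarrow> (nat \<Rightarrow> nat set) pmf"
  assumes finS: "finite S" and cS: "card S = m" and m0: "0 < m"
    and sizes: "\<And>A. A \<in> S \<Longrightarrow> finite A \<and> card A = k" and k0: "0 < k"
    and inter: "\<And>A B. A \<in> S \<Longrightarrow> B \<in> S \<Longrightarrow> A \<noteq> B \<Longrightarrow> card (A \<inter> B) \<le> s"
    and ts: "t * s < k" and finU: "finite (\<Union>S)" and r0: "0 < r" and eps: "0 \<le> eps"
    and dp: "diff_private eps (\<Union>S) M" and va: "valid_assignment_mech (\<Union>S) S M"
  shows "\<exists>R A. A \<in> S \<and> R \<subseteq> A \<and> R \<noteq> {} \<and>
     measure_pmf.prob (M R) {f. card (f ` R) \<le> t}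
       \<le> exp (eps * r) * ((card (\<Union>S) * k ^ r + m * (k ^ t * (t * s) ^ r)) / (m * k ^ r))"
proof -
  let ?U = "\<Union>S"
  let ?D = "Sigma S (\<lambda>A. PiE {..<r} (\<lambda>_. A))"
  let ?Bad = "\<lambda>d. {f :: nat \<Rightarrow> nat set. card (f ` snd d ` {..<r}) \<le> t}"
  let ?B = "real (card ?U * k ^ r + m * (k ^ t * (t * s) ^ r))"
  let ?Q = "M {}"
  have finPi: "\<forall>A\<in>S. finite (PiE {..<r} (\<lambda>_. A))"
  proof
    fix A assume "A \<in> S" then have "finite A" using sizes by simp
    then show "finite (PiE {..<r} (\<lambda>_. A))" by (intro finite_PiE) simp_all
  qed
  have finD: "finite ?D" using finS finPi by (intro finite_SigmaI) simp_all
  have cD: "card ?D = m * k ^ r"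
  proof -
    have "card ?D = (\<Sum>A\<in>S. card (PiE {..<r} (\<lambda>_. A)))" by (rule card_SigmaI[OF finS finPi])
    also have "\<dots> = (\<Sum>A\<in>S. k ^ r)"
    proof (rule sum.cong[OF refl])
      fix A assume "A \<in> S" then have "card A = k" using sizes by simp
      then show "card (PiE {..<r} (\<lambda>_. A)) = k ^ r" by (simp add: card_PiE)
    qed
    also have "\<dots> = m * k ^ r" using cS by simp
    finally show ?thesis .
  qed
  have Dne: "?D \<noteq> {}" using cD m0 k0 by (metis card.empty mult_is_0 power_not_zero neq0_conv)
  have sumle: "(\<Sum>d\<in>?D. measure_pmf.prob ?Q (?Bad d)) \<le> ?B"
  proof -
    have "(\<Sum>d\<in>?D. measure_pmf.prob ?Q (?Bad d)) = (\<Sum>d\<in>?D. measure_pmf.expectation ?Q (indicator (?Bad d)))"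
      by (rule sum.cong[OF refl]) (rule pmf_prob_int)
    also have "\<dots> = measure_pmf.expectation ?Q (\<lambda>f. \<Sum>d\<in>?D. indicator (?Bad d) f)"
      using Bochner_Integration.integral_sum[of ?D "measure_pmf ?Q" "\<lambda>d. indicator (?Bad d) :: _ \<Rightarrow> real", OF pmf_integrable_ind]
      by simp
    also have "\<dots> \<le> ?B"
    proof (rule measure_pmf.integral_le_const)
      show "integrable (measure_pmf ?Q) (\<lambda>f. \<Sum>d\<in>?D. indicator (?Bad d) f :: real)"
        by (rule Bochner_Integration.integrable_sum) (rule pmf_integrable_ind)
      show "AE f in measure_pmf ?Q. (\<Sum>d\<in>?D. indicator (?Bad d) f) \<le> ?B"
      proof (rule AE_pmfI)
        fix f assume f: "f \<in> set_pmf ?Q"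
        have valid: "f e \<in> S \<and> e \<in> f e" if "e \<in> ?U" for e
          using va f that unfolding valid_assignment_mech_def by blast
        have "(\<Sum>d\<in>?D. indicator (?Bad d) f :: real) = real (card {d \<in> ?D. f \<in> ?Bad d})"
          using finD by (simp add: indicator_def sum.If_cases Int_def)
        also have "\<dots> \<le> ?B"
          using of_nat_mono[OF count_f[OF finS cS sizes inter valid ts finU, of r], where 'a=real] by simp
        finally show "(\<Sum>d\<in>?D. indicator (?Bad d) f) \<le> ?B" .
      qed
    qed
    finally show ?thesis .
  qed
  have "\<exists>d\<in>?D. measure_pmf.prob ?Q (?Bad d) \<le> ?B / card ?D"
  proof (rule ccontr)
    assume nt: "\<not> ?thesis"
    have lt: "?B / card ?D < measure_pmf.prob ?Q (?Bad d)" if "d \<in> ?D" for d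
      using nt that by (meson not_le)
    have "(\<Sum>d\<in>?D. ?B / card ?D) < (\<Sum>d\<in>?D. measure_pmf.prob ?Q (?Bad d))"
      by (rule sum_strict_mono[OF finD Dne lt])
    moreover have "(\<Sum>d\<in>?D. ?B / card ?D) = ?B" using Dne finD by simp
    ultimately show False using sumle by simp
  qed
  then obtain d where d: "d \<in> ?D" and pd: "measure_pmf.prob ?Q (?Bad d) \<le> ?B / card ?D" by blast
  obtain A g where dAg: "d = (A, g)" by (cases d)
  have A: "A \<in> S" and g: "g \<in> PiE {..<r} (\<lambda>_. A)" using d dAg by auto
  let ?R = "g ` {..<r}"
  have RA: "?R \<subseteq> A" using PiE_mem[OF g] by auto
  have RU: "?R \<subseteq> ?U" using RA A by auto
  have Rne: "?R \<noteq> {}" using r0 by auto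
  have cR: "card ?R \<le> r" using card_image_le[of "{..<r}" g] by simp
  have "measure_pmf.prob (M ?R) {f. card (f ` ?R) \<le> t} = measure_pmf.prob (M ?R) (?Bad d)"
    using dAg by simp
  also have "\<dots> \<le> exp (eps * card ?R) * measure_pmf.prob ?Q (?Bad d)"
    by (rule group_priv[OF dp _ RU]) simp
  also have "\<dots> \<le> exp (eps * r) * (?B / card ?D)"
  proof (rule mult_mono)
    show "exp (eps * card ?R) \<le> exp (eps * r)" using cR eps by (simp add: mult_left_mono)
  qed (use pd in auto)
  finally show ?thesis using A RA Rne cD by (intro exI[of _ ?R] exI[of _ A]) simp
qed



definition enc :: "nat \<Rightarrow> nat \<Rightarrow> (nat \<Rightarrow> nat) \<Rightarrow> nat set" where
  "enc k a w = (\<lambda>i. i * a + w i) ` {..<k}"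

lemma design:
  assumes sk: "s < k" and a: "0 < a"
    and big: "m * ((k choose (s+1)) * a ^ (k - (s+1))) \<le> a ^ k"
  shows "\<exists>S :: nat set set. finite S \<and> card S = m \<and> (\<forall>A\<in>S. finite A \<and> card A = k) \<and>
     (\<forall>A\<in>S. \<forall>B\<in>S. A \<noteq> B \<longrightarrow> card (A \<inter> B) \<le> s) \<and> card (\<Union>S) \<le> k * a"
proof -
  obtain W where W: "W \<subseteq> words k a" "card W = m"
      "\<forall>v\<in>W. \<forall>w\<in>W. v \<noteq> w \<longrightarrow> agree k v w \<le> s"
    using code_exists[OF sk a big, of m] by auto
  have finW: "finite W" using finite_subset[OF W(1) finite_words] .
  have wa: "w i < a" if "w \<in> words k a" "i < k" for w i
    using that unfolding words_def by (auto dest: PiE_mem)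
  have inter: "enc k a v \<inter> enc k a w \<subseteq> (\<lambda>i. i * a + v i) ` {i\<in>{..<k}. v i = w i}"
    if v: "v \<in> words k a" and w: "w \<in> words k a" for v w
  proof
    fix x assume "x \<in> enc k a v \<inter> enc k a w"
    then obtain i j where ij: "i < k" "j < k" "x = i * a + v i" "x = j * a + w j"
      unfolding enc_def by auto
    then have e: "i = j \<and> v i = w j" using div_enc[of "v i" a "w j" i j] wa v w by simp
    show "x \<in> (\<lambda>i. i * a + v i) ` {i\<in>{..<k}. v i = w i}"
    proof (rule image_eqI[of _ _ i])
      show "x = i * a + v i" using ij(3) .
      have "v i = w i" using e by (elim conjE) simp
      then show "i \<in> {i\<in>{..<k}. v i = w i}" using ij(1) by simp
    qed
  qed
  have cenc: "card (enc k a w) = k" if w: "w \<in> words k a" for w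
  proof -
    have "inj_on (\<lambda>i. i * a + w i) {..<k}"
    proof (rule inj_onI)
      fix i j assume "i \<in> {..<k}" "j \<in> {..<k}" "i * a + w i = j * a + w j"
      then show "i = j" using div_enc[of "w i" a "w j" i j] wa w by simp
    qed
    then show ?thesis unfolding enc_def by (simp add: card_image)
  qed
  have injW: "inj_on (enc k a) W"
  proof (rule inj_onI)
    fix v w assume v: "v \<in> W" and w: "w \<in> W" and e: "enc k a v = enc k a w"
    have vw: "v \<in> words k a" "w \<in> words k a" using v w W(1) by auto
    show "v = w"
    proof (rule PiE_ext)
      show "v \<in> PiE {..<k} (\<lambda>_. {..<a})" "w \<in> PiE {..<k} (\<lambda>_. {..<a})"
        using vw unfolding words_def by simp_all
      fix i assume i: "i \<in> {..<k}"
      then have "i * a + v i \<in> enc k a w" using e unfolding enc_def by auto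
      then obtain j where "j < k" "i * a + v i = j * a + w j" unfolding enc_def by auto
      then show "v i = w i" using div_enc[of "v i" a "w j" i j] wa vw i by auto
    qed
  qed
  let ?S = "enc k a ` W"
  have c1: "finite ?S" using finW by simp
  have c2: "card ?S = m" using card_image[OF injW] W(2) by simp
  have c3: "\<forall>A\<in>?S. finite A \<and> card A = k"
  proof
    fix A assume "A \<in> ?S"
    then obtain w where w: "w \<in> W" "A = enc k a w" by auto
    then have "w \<in> words k a" using W(1) by auto
    then show "finite A \<and> card A = k" using w cenc unfolding enc_def by simp
  qed
  have c4: "\<forall>A\<in>?S. \<forall>B\<in>?S. A \<noteq> B \<longrightarrow> card (A \<inter> B) \<le> s"
  proof (intro ballI impI)
    fix A B assume A: "A \<in> ?S" and B: "B \<in> ?S" and AB: "A \<noteq> B"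
    then obtain v w where vw: "v \<in> W" "w \<in> W" "A = enc k a v" "B = enc k a w" by auto
    then have vw': "v \<in> words k a" "w \<in> words k a" using W(1) by auto
    have "v \<noteq> w" using AB vw by auto
    then have ag: "agree k v w \<le> s" using W(3) vw by simp
    have "card (A \<inter> B) \<le> card ((\<lambda>i. i * a + v i) ` {i\<in>{..<k}. v i = w i})"
      using inter[OF vw'] vw by (intro card_mono) auto
    also have "\<dots> \<le> card {i\<in>{..<k}. v i = w i}" by (rule card_image_le) simp
    also have "\<dots> \<le> s" using ag unfolding agree_def .
    finally show "card (A \<inter> B) \<le> s" .
  qed
  have "\<Union>?S \<subseteq> {..<k * a}"
  proof
    fix x assume "x \<in> \<Union>?S"
    then obtain w i where w: "w \<in> W" "i < k" "x = i * a + w i" unfolding enc_def by auto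
    then have "w i < a" using wa W(1) by auto
    then have "x < (i + 1) * a" using w by simp
    also have "\<dots> \<le> k * a" using w(2) by (intro mult_right_mono) auto
    finally show "x \<in> {..<k * a}" by simp
  qed
  then have c5: "card (\<Union>?S) \<le> k * a" using card_mono[of "{..<k*a}"] by fastforce
  show ?thesis using c1 c2 c3 c4 c5 by blast
qed

lemma OPT_le_1:
  assumes "finite S" "A \<in> S" "R \<subseteq> A"
  shows "OPT S R \<le> 1"
proof -
  let ?X = "{card C | C. C \<subseteq> S \<and> R \<subseteq> \<Union>C}"
  have "?X \<subseteq> card ` Pow S"
  proof
    fix x assume "x \<in> ?X"
    then obtain C where C: "x = card C" "C \<subseteq> S" by blast
    then show "x \<in> card ` Pow S" by simp
  qed
  moreover have "finite (card ` Pow S)" using assms(1) by simp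
  ultimately have fin: "finite ?X" by (rule finite_subset)
  have "{A} \<subseteq> S \<and> R \<subseteq> \<Union>{A}" using assms by simp
  then have mem: "card {A} \<in> ?X" by (intro CollectI exI[of _ "{A}"]) simp
  have "Min ?X \<le> card {A}" by (rule Min_le[OF fin mem])
  then show ?thesis unfolding OPT_def by simp
qed

lemma expect_lb:
  fixes p :: "(nat \<Rightarrow> nat set) pmf"
  assumes fR: "finite R" and pb: "measure_pmf.prob p {f. card (f ` R) \<le> t} \<le> 1/2"
  shows "(real t + 1) / 2 \<le> measure_pmf.expectation p (\<lambda>f. real (card (f ` R)))"
proof -
  let ?G = "{f. \<not> card (f ` R) \<le> t}"
  have pG: "measure_pmf.prob p ?G = 1 - measure_pmf.prob p {f. card (f ` R) \<le> t}"
    using measure_pmf.prob_compl[of "{f. card (f ` R) \<le> t}" p]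
    by (simp add: Compl_eq_Diff_UNIV[symmetric] Collect_neg_eq)
  have int: "integrable (measure_pmf p) (\<lambda>f. real (card (f ` R)))"
  proof (rule measure_pmf.integrable_const_bound[where B="real (card R)"])
    show "AE x in measure_pmf p. norm (real (card (x ` R))) \<le> real (card R)"
      by (rule AE_pmfI) (simp add: card_image_le[OF fR])
  qed simp
  have "(real t + 1) * measure_pmf.prob p ?G = measure_pmf.expectation p (\<lambda>f. (real t + 1) * indicator ?G f)"
    by (simp add: integral_indicator)
  also have "\<dots> \<le> measure_pmf.expectation p (\<lambda>f. real (card (f ` R)))"
  proof (rule integral_mono[OF _ int])
    show "integrable (measure_pmf p) (\<lambda>f. (real t + 1) * indicator ?G f)"
      by (intro integrable_mult_right pmf_integrable_ind)
    fix f show "(real t + 1) * indicator ?G f \<le> real (card (f ` R))"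
      by (auto simp: indicator_def)
  qed
  finally have "(real t + 1) * measure_pmf.prob p ?G \<le> measure_pmf.expectation p (\<lambda>f. real (card (f ` R)))" .
  moreover have "(real t + 1) / 2 \<le> (real t + 1) * measure_pmf.prob p ?G"
  proof -
    have "1/2 \<le> measure_pmf.prob p ?G" using pG pb by linarith
    then have "(real t + 1) * (1/2) \<le> (real t + 1) * measure_pmf.prob p ?G"
      by (intro mult_left_mono) simp_all
    then show ?thesis by simp
  qed
  ultimately show ?thesis by linarith
qed



lemma second_term:
  fixes eps :: real and t s k :: nat
  assumes t1: "1 \<le> t" and kdef: "k = 64 * t^2 * s^2" and s1: "1 \<le> s" and e0: "0 \<le> eps" and e1: "eps \<le> 1"
  shows "exp (eps * real (2*t)) * (real k ^ t * (real t * real s) ^ (2*t) / real k ^ (2*t)) \<le> 1/4"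
proof -
  have kpos: "0 < real k" using kdef t1 s1 by simp
  have k64: "real k / 64 = (real t * real s)^2" using kdef by (simp add: power_mult_distrib)
  have ts2: "(real t * real s) ^ (2*t) = (real k / 64) ^ t"
    unfolding k64 by (simp add: power_mult)
  have "real k ^ t * (real t * real s) ^ (2*t) / real k ^ (2*t) = (real k / 64) ^ t / real k ^ t"
  proof -
    have "real k ^ (2*t) = real k ^ t * real k ^ t" by (simp add: mult_2 power_add)
    then show ?thesis unfolding ts2 using kpos by simp
  qed
  also have "\<dots> = (1/64) ^ t" using kpos by (simp add: power_divide)
  finally have eq: "real k ^ t * (real t * real s) ^ (2*t) / real k ^ (2*t) = (1/64) ^ t" .
  have "eps * real t \<le> 1 * real t" using e1 by (intro mult_right_mono) simp_all
  then have "exp (eps * real (2*t)) \<le> exp (2 * real t)" by simp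
  also have "\<dots> = exp 2 ^ t" by (metis exp_of_nat_mult mult.commute)
  also have "\<dots> \<le> 9 ^ t"
  proof (rule power_mono)
    have "exp (2::real) = exp 1 * exp 1" by (simp add: exp_add[symmetric])
    also have "\<dots> \<le> 3 * 3" using exp_le by (intro mult_mono) auto
    finally show "exp (2::real) \<le> 9" by simp
  qed simp
  finally have ex: "exp (eps * real (2*t)) \<le> 9 ^ t" .
  have "exp (eps * real (2*t)) * (1/64) ^ t \<le> 9 ^ t * (1/64) ^ t"
    by (rule mult_right_mono[OF ex]) simp
  also have "\<dots> = (9/64) ^ t" by (simp add: power_mult_distrib[symmetric])
  also have "\<dots> \<le> (9/64) ^ 1" by (rule power_decreasing[OF t1]) simp_all
  also have "\<dots> \<le> 1/4" by simp
  finally show ?thesis using eq by simp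
qed

lemma first_term:
  fixes eps P L :: real and n m :: nat
  assumes ex: "exp (eps * r) \<le> P ^ 10" and m: "real m = P ^ 20" and n: "real n \<le> 512 * L ^ 8"
    and L0: "0 < L" and LP: "L \<le> P / 2" and P3: "3 \<le> P"
  shows "exp (eps * r) * (real n / real m) \<le> 1/4"
proof -
  have P0: "0 < P" using P3 by simp
  have "real n / real m \<le> 512 * L ^ 8 / P ^ 20"
    unfolding m using n P0 by (intro divide_right_mono) auto
  then have "exp (eps * r) * (real n / real m) \<le> P ^ 10 * (512 * L ^ 8 / P ^ 20)"
    using ex P0 by (intro mult_mono) auto
  also have "\<dots> \<le> P ^ 10 * (512 * (P/2) ^ 8 / P ^ 20)"
    using L0 LP P0 by (intro mult_left_mono divide_right_mono mult_left_mono power_mono) auto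
  also have "\<dots> = 2 / P^2" using P0 by (simp add: field_simps power_divide)
  also have "\<dots> \<le> 2 / 9"
  proof -
    have "9 \<le> P^2" using P3 power_mono[of 3 P 2] by simp
    then show ?thesis by (intro divide_left_mono) auto
  qed
  also have "\<dots> \<le> 1/4" by simp
  finally show ?thesis .
qed



lemma main_inner:
  fixes m :: nat and eps :: real
  assumes mm: "m \<ge> nat \<lceil>exp (3000::real)\<rceil>"
    and ep1: "2 * ln (real m) / real m powr (1/20) < eps" and ep2: "eps < 1"
  shows "\<exists>(U::nat set) (S::nat set set).
          finite U \<and> card S = m \<and> (\<forall>A\<in>S. A \<subseteq> U) \<and> \<Union>S = U \<and>
          real (card U) \<le> (ln (real m) / eps) powr 9 \<and>
          (\<forall>M :: nat set \<Rightarrow> (nat \<Rightarrow> nat set) pmf.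
             diff_private eps U M \<and> valid_assignment_mech U S M \<longrightarrow>
             (\<exists>R. R \<subseteq> U \<and> R \<noteq> {} \<and>
                measure_pmf.expectation (M R) (\<lambda>f. real (card (f ` R)))
                  \<ge> 1/8 * (ln (real m) / eps) * real (OPT S R)))"
proof -
  define lm where "lm = ln (real m)"
  have mexp: "exp 3000 \<le> real m"
  proof -
    have "exp 3000 \<le> real (nat \<lceil>exp (3000::real)\<rceil>)" by linarith
    also have "\<dots> \<le> real m" using mm by (simp only: of_nat_le_iff)
    finally show ?thesis .
  qed
  have mpos: "0 < real m" using mexp by (metis exp_gt_zero less_le_trans)
  have lm3000: "3000 \<le> lm" unfolding lm_def using mexp mpos
    by (metis exp_le_cancel_iff exp_ln)
  define P where "P = real m powr (1/20)"
  have Pexp: "P = exp (lm / 20)" unfolding P_def lm_def powr_def using mpos by simp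
  have Ppos: "0 < P" using Pexp by simp
  have mP: "real m = P ^ 20"
  proof -
    have "P ^ 20 = exp (real 20 * (lm / 20))" unfolding Pexp by (rule exp_of_nat_mult[symmetric])
    also have "\<dots> = real m" unfolding lm_def using mpos by simp
    finally show ?thesis by simp
  qed
  have P3: "3 \<le> P"
  proof -
    have "1 + lm / 20 \<le> exp (lm / 20)" by (rule exp_ge_add_one_self)
    moreover have "3 \<le> 1 + lm / 20" using lm3000 by simp
    ultimately show ?thesis using Pexp by linarith
  qed
  have lmpos: "0 < lm" using lm3000 by simp
  have eps0: "0 < eps"
  proof -
    have "0 < 2 * lm / P" using lmpos Ppos by simp
    then show ?thesis using ep1 unfolding lm_def P_def by simp
  qed
  define L where "L = lm / eps"
  have Lgt: "lm < L" unfolding L_def using eps0 ep2 lmpos by (simp add: less_divide_eq)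
  have LP: "L \<le> P / 2"
  proof -
    have "2 * lm / P < eps" using ep1 unfolding lm_def P_def .
    then have "2 * lm < eps * P" using Ppos by (simp add: divide_less_eq mult.commute)
    then show ?thesis unfolding L_def using eps0 by (simp add: divide_le_eq field_simps)
  qed
  have Lpos: "0 < L" using Lgt lmpos by simp
  define t where "t = nat \<lfloor>L / 4\<rfloor>"
  have t_le: "real t \<le> L / 4" unfolding t_def using Lpos by linarith
  have t_gt: "L / 4 < real t + 1" unfolding t_def using Lpos by linarith
  have t1: "1 \<le> t" unfolding t_def using Lgt lm3000 by linarith
  have ln2: "2/3 \<le> ln (2::real)" by (rule ln2_ge_two_thirds)
  define s where "s = nat \<lceil>lm / ln 2\<rceil>"
  have s_ge: "lm / ln 2 \<le> real s" unfolding s_def by linarith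
  have x0: "0 \<le> lm / ln 2" using lmpos ln2 by simp
  have s_lt: "real s \<le> lm / ln 2 + 1"
  proof -
    have "real s = of_int \<lceil>lm / ln 2\<rceil>" unfolding s_def using x0 by simp
    then show ?thesis using of_int_ceiling_le_add_one[of "lm / ln 2"] by linarith
  qed
  have s_le: "real s \<le> 2 * L"
  proof -
    have "lm / ln 2 \<le> lm / (2/3)" using ln2 lmpos by (intro divide_left_mono) auto
    then have "lm / ln 2 \<le> 3/2 * lm" by simp
    then show ?thesis using s_lt Lgt lm3000 by linarith
  qed
  have s1: "1 \<le> s"
  proof -
    have "0 < lm / ln 2" using lmpos ln2 by simp
    then show ?thesis using s_ge by simp
  qed
  define r where "r = 2 * t"
  define k where "k = 64 * t^2 * s^2"
  define a where "a = 2 * k"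
  have kpos: "0 < k" unfolding k_def using t1 s1 by simp
  have sk: "s + 1 \<le> k"
  proof -
    have "s \<le> s * s" using s1 by simp
    then have "s + 1 \<le> 64 * s^2" using s1 unfolding power2_eq_square by linarith
    also have "\<dots> \<le> 64 * t^2 * s^2" using t1 by simp
    finally show ?thesis unfolding k_def .
  qed
  have ts: "t * s < k"
  proof -
    have ts1: "1 \<le> t * s" using mult_le_mono[OF t1 s1] by simp
    have "t * s < 64 * (t * s)" using ts1 by linarith
    also have "\<dots> \<le> 64 * (t * s) * (t * s)" using ts1 by simp
    finally have "t * s < 64 * (t * s) * (t * s)" .
    then show ?thesis unfolding k_def by (simp add: power2_eq_square ac_simps)
  qed
  have m2s: "m \<le> 2 ^ s"
  proof -
    have "lm \<le> real s * ln 2" using s_ge ln2 by (simp add: divide_le_eq)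
    then have "exp lm \<le> exp (real s * ln 2)" by simp
    also have "\<dots> = 2 ^ s" by (simp add: exp_of_nat_mult)
    finally have "real m \<le> 2 ^ s" unfolding lm_def using mpos by simp
    then show ?thesis by (metis of_nat_le_iff of_nat_numeral of_nat_power)
  qed
  have big: "m * ((k choose (s+1)) * a ^ (k - (s+1))) \<le> a ^ k"
  proof -
    have "m * ((k choose (s+1)) * a ^ (k - (s+1))) \<le> 2 ^ (s+1) * (k ^ (s+1) * a ^ (k - (s+1)))"
      using m2s binomial_le_pow[OF sk] by (intro mult_mono) auto
    also have "\<dots> = a ^ (s+1) * a ^ (k - (s+1))" unfolding a_def by (simp add: power_mult_distrib)
    also have "\<dots> = a ^ (s + 1 + (k - (s+1)))" by (simp only: power_add)
    also have "\<dots> = a ^ k" using sk by simp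
    finally show ?thesis .
  qed
  obtain S :: "nat set set" where S: "finite S" "card S = m" "\<forall>A\<in>S. finite A \<and> card A = k"
      "\<forall>A\<in>S. \<forall>B\<in>S. A \<noteq> B \<longrightarrow> card (A \<inter> B) \<le> s" "card (\<Union>S) \<le> k * a"
    using design[of s k a m] sk big kpos unfolding a_def by auto
  define U where "U = \<Union>S"
  have finU: "finite U" unfolding U_def using S(1,3) by auto
  have kL: "real k \<le> 16 * L^4"
  proof -
    have "real k = 64 * real t ^ 2 * real s ^ 2" unfolding k_def by simp
    also have "\<dots> \<le> 64 * (L/4) ^ 2 * (2 * L) ^ 2"
      using t_le s_le by (intro mult_mono power_mono) auto
    also have "\<dots> = 16 * L^4" by (simp add: power2_eq_square power4_eq_xxxx)
    finally show ?thesis .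
  qed
  have nL: "real (card U) \<le> 512 * L ^ 8"
  proof -
    have "real (card U) \<le> real k * real a" using S(5) unfolding U_def by (metis of_nat_le_iff of_nat_mult)
    also have "\<dots> = 2 * real k ^ 2" unfolding a_def by (simp add: power2_eq_square)
    also have "\<dots> \<le> 2 * (16 * L^4) ^ 2" using kL by (intro mult_left_mono power_mono) auto
    also have "\<dots> = 512 * L ^ 8" by (simp add: power_mult_distrib power_mult[symmetric])
    finally show ?thesis .
  qed
  have cardU: "real (card U) \<le> (ln (real m) / eps) powr 9"
  proof -
    have "512 * L ^ 8 \<le> L * L ^ 8" using Lgt lm3000 by (intro mult_right_mono) auto
    then have "real (card U) \<le> L ^ 9" using nL by (simp add: power_Suc[symmetric])
    then show ?thesis unfolding L_def lm_def using Lpos[unfolded L_def lm_def] by (simp add: powr_numeral)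
  qed
  have expr: "exp (eps * real r) \<le> P ^ 10"
  proof -
    have "eps * real r \<le> eps * (L / 2)" unfolding r_def using t_le eps0 by (intro mult_left_mono) auto
    also have "\<dots> = lm / 2" unfolding L_def using eps0 by simp
    finally have "exp (eps * real r) \<le> exp (real 10 * (lm / 20))" by simp
    also have "\<dots> = P ^ 10" unfolding Pexp by (rule exp_of_nat_mult)
    finally show ?thesis .
  qed
  have FT: "exp (eps * real r) * (real (card U) / real m) \<le> 1/4"
    by (rule first_term[OF expr mP nL Lpos LP P3])
  have ST: "exp (eps * real r) * (real k ^ t * (real t * real s) ^ r / real k ^ r) \<le> 1/4"
    unfolding r_def by (rule second_term[OF t1 k_def s1]) (use eps0 ep2 in auto)
  have c3: "\<forall>A\<in>S. A \<subseteq> U" unfolding U_def by auto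
  have c4: "\<Union>S = U" unfolding U_def ..
  have mech: "\<forall>M :: nat set \<Rightarrow> (nat \<Rightarrow> nat set) pmf.
             diff_private eps U M \<and> valid_assignment_mech U S M \<longrightarrow>
             (\<exists>R. R \<subseteq> U \<and> R \<noteq> {} \<and>
                measure_pmf.expectation (M R) (\<lambda>f. real (card (f ` R)))
                  \<ge> 1/8 * (ln (real m) / eps) * real (OPT S R))"
  proof (intro allI impI)
    fix M :: "nat set \<Rightarrow> (nat \<Rightarrow> nat set) pmf"
    assume MM: "diff_private eps U M \<and> valid_assignment_mech U S M"
    have "\<exists>R A. A \<in> S \<and> R \<subseteq> A \<and> R \<noteq> {} \<and>
     measure_pmf.prob (M R) {f. card (f ` R) \<le> t}
       \<le> exp (eps * real r) * (real (card (\<Union>S) * k ^ r + m * (k ^ t * (t * s) ^ r)) / (real m * real k ^ r))"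
    proof (rule main_prob[OF S(1) S(2)])
      show "0 < m" using mpos by simp
      show "\<And>A. A \<in> S \<Longrightarrow> finite A \<and> card A = k" using S(3) by simp
      show "0 < k" by (rule kpos)
      show "\<And>A B. A \<in> S \<Longrightarrow> B \<in> S \<Longrightarrow> A \<noteq> B \<Longrightarrow> card (A \<inter> B) \<le> s" using S(4) by simp
      show "t * s < k" by (rule ts)
      show "finite (\<Union>S)" using finU unfolding U_def .
      show "0 < r" unfolding r_def using t1 by simp
      show "0 \<le> eps" using eps0 by simp
      show "diff_private eps (\<Union>S) M" using MM unfolding U_def by simp
      show "valid_assignment_mech (\<Union>S) S M" using MM unfolding U_def by simp
    qed
    then obtain R A where RA: "A \<in> S" "R \<subseteq> A" "R \<noteq> {}"
      and pr: "measure_pmf.prob (M R) {f. card (f ` R) \<le> t}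
       \<le> exp (eps * real r) * (real (card (\<Union>S) * k ^ r + m * (k ^ t * (t * s) ^ r)) / (real m * real k ^ r))"
      by blast
    show "\<exists>R. R \<subseteq> U \<and> R \<noteq> {} \<and>
                measure_pmf.expectation (M R) (\<lambda>f. real (card (f ` R)))
                  \<ge> 1/8 * (ln (real m) / eps) * real (OPT S R)"
    proof (intro exI[of _ R] conjI)
      show "R \<subseteq> U" using RA unfolding U_def by auto
      show "R \<noteq> {}" by (rule RA(3))
      have kr: "0 < real k ^ r" using kpos by simp
      have split: "real (card (\<Union>S) * k ^ r + m * (k ^ t * (t * s) ^ r)) / (real m * real k ^ r)
          = real (card U) / real m + real k ^ t * (real t * real s) ^ r / real k ^ r"
        unfolding U_def using mpos kr by (simp add: field_simps)
      have "measure_pmf.prob (M R) {f. card (f ` R) \<le> t}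
          \<le> exp (eps * real r) * (real (card U) / real m)
            + exp (eps * real r) * (real k ^ t * (real t * real s) ^ r / real k ^ r)"
        using pr unfolding split by (simp add: distrib_left)
      also have "\<dots> \<le> 1/2" using FT ST by linarith
      finally have pb: "measure_pmf.prob (M R) {f. card (f ` R) \<le> t} \<le> 1/2" .
      have fR: "finite R" using RA S(3) finite_subset by blast
      have E: "(real t + 1) / 2 \<le> measure_pmf.expectation (M R) (\<lambda>f. real (card (f ` R)))"
        by (rule expect_lb[OF fR pb])
      have opt: "real (OPT S R) \<le> 1" using OPT_le_1[OF S(1) RA(1) RA(2)] by simp
      have "1/8 * (ln (real m) / eps) * real (OPT S R) \<le> 1/8 * L * 1"
        unfolding L_def lm_def using opt Lpos[unfolded L_def lm_def] by (intro mult_left_mono) auto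
      also have "\<dots> \<le> (real t + 1) / 2" using t_gt by simp
      finally show "measure_pmf.expectation (M R) (\<lambda>f. real (card (f ` R)))
                  \<ge> 1/8 * (ln (real m) / eps) * real (OPT S R)" using E by simp
    qed
  qed
  show ?thesis
    by (rule exI[of _ U], rule exI[of _ S], intro conjI finU S(2) c3 c4 cardU mech)
qed


theorem mainTheorem12:
  "\<exists>(c::real) (K::real) (m0::nat). c > 0 \<and> K \<ge> 1 \<and>
    (\<forall>m::nat. m \<ge> m0 \<longrightarrow>
     (\<forall>eps::real. 2 * ln (real m) / real m powr (1/20) < eps \<and> eps < 1 \<longrightarrow>
      (\<exists>(U::nat set) (S::nat set set).
          finite U \<and> card S = m \<and> (\<forall>A\<in>S. A \<subseteq> U) \<and> \<Union>S = U \<and>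
          real (card U) \<le> (ln (real m) / eps) powr K \<and>
          (\<forall>M :: nat set \<Rightarrow> (nat \<Rightarrow> nat set) pmf.
             diff_private eps U M \<and> valid_assignment_mech U S M \<longrightarrow>
             (\<exists>R. R \<subseteq> U \<and> R \<noteq> {} \<and>
                measure_pmf.expectation (M R) (\<lambda>f. real (card (f ` R)))
                  \<ge> c * (ln (real m) / eps) * real (OPT S R))))))"
  proof (rule exI[of _ "1/8::real"], rule exI[of _ "9::real"], rule exI[of _ "nat \<lceil>exp (3000::real)\<rceil>"], intro conjI allI impI)
  show "(0::real) < 1/8" by simp
  show "(1::real) \<le> 9" by simp
  fix m :: nat and eps :: real
  assume mm: "nat \<lceil>exp (3000::real)\<rceil> \<le> m"
    and ee: "2 * ln (real m) / real m powr (1/20) < eps \<and> eps < 1"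
  from ee have e1: "2 * ln (real m) / real m powr (1/20) < eps" and e2: "eps < 1" by simp_all
  show "\<exists>(U::nat set) (S::nat set set).
          finite U \<and> card S = m \<and> (\<forall>A\<in>S. A \<subseteq> U) \<and> \<Union>S = U \<and>
          real (card U) \<le> (ln (real m) / eps) powr 9 \<and>
          (\<forall>M :: nat set \<Rightarrow> (nat \<Rightarrow> nat set) pmf.
             diff_private eps U M \<and> valid_assignment_mech U S M \<longrightarrow>
             (\<exists>R. R \<subseteq> U \<and> R \<noteq> {} \<and>
                measure_pmf.expectation (M R) (\<lambda>f. real (card (f ` R)))
                  \<ge> 1/8 * (ln (real m) / eps) * real (OPT S R)))"
    by (rule main_inner[OF mm e1 e2])
qed

end
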